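(* Let $\mathcal{A}\in\mathbb{C}^{m\times m\times p}$ be a fixed Hermitian T-product tensor and let $\mathcal{X}\in\mathbb{C}^{m\times m\times p}$ be a random Hermitian T-product tensor such that $$\mathbb{E}\mathcal{X}=\mathcal{O}\quad\text{and}\quad\mathbb{E}(\mathcal{X}^k)\preceq\frac{k!}{2}\mathcal{A}^2\quad\text{for all }k=2,3,4,\dots.$$ Then for every $0<t<1$, $$\mathbb{E}e^{t\mathcal{X}}\preceq\exp\left(\frac{t^2\mathcal{A}^2}{2(1-t)}\right).$$
   Context: For $\mathcal{A}\in\mathbb{C}^{m\times n\times p}$ with frontal slices $A^{(1)},\dots,A^{(p)}$, $\mathrm{bcirc}(\mathcal{A})\in\mathbb{C}^{mp\times np}$ is the block circulant matrix whose $(r,s)$ block is $A^{(((r-s)\bmod p)+1)}$. The T-product $\mathcal{A}\star\mathcal{B}$ is the tensor with $\mathrm{bcirc}(\mathcal{A}\star\mathcal{B})=\mathrm{bcirc}(\mathcal{A})\mathrm{bcirc}(\mathcal{B})$; powers are T-product powers and $e^{\mathcal{A}}=\exp(\mathcal{A})=\sum_{k\ge0}\mathcal{A}^k/k!$ with $\mathcal{A}^0=\mathcal{I}$, the identity tensor (first frontal slice $I_m$, other slices zero). The conjugate transpose $\mathcal{A}^{\mathrm H}$ is obtained by conjugate-transposing every frontal slice and reversing the order of slices $2,\dots,p$; $\mathcal{A}$ is Hermitian if $\mathcal{A}^{\mathrm H}=\mathcal{A}$. For Hermitian $\mathcal{A},\mathcal{B}$, $\mathcal{A}\preceq\mathcal{B}$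 means $\mathrm{bcirc}(\mathcal{B}-\mathcal{A})$ is positive semidefinite; $\mathcal{O}$ is the zero tensor. Expectation is entrywise. *)

theory Defs
  imports "HOL-Probability.Probability" "Jordan_Normal_Form.Matrix"
begin

text \<open>A third-order tensor in C^(m x n x p) is represented by its entry function
  T i j k (row i < m, column j < n, frontal slice k < p, all 0-indexed).
  Entries outside the index range are irrelevant.\<close>
type_synonym tensor = "nat \<Rightarrow> nat \<Rightarrow> nat \<Rightarrow> complex"

text \<open>Block circulant matrix: block (r,s) (0-indexed) is frontal slice ((r - s) mod p).\<close>
definition bcirc :: "nat \<Rightarrow> nat \<Rightarrow> nat \<Rightarrow> tensor \<Rightarrow> complex mat" where
  "bcirc m n p T = mat (m * p) (n * p)
     (\<lambda>(i, j). T (i mod m) (j mod n) ((i div m + p - j div n) mod p))"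

text \<open>Inverse of bcirc: read off the first block column.\<close>
definition unbcirc :: "nat \<Rightarrow> nat \<Rightarrow> complex mat \<Rightarrow> tensor" where
  "unbcirc m p B = (\<lambda>i j k. B $$ (k * m + i, j))"

text \<open>T-product of A (m x n x p) and B (n x q x p): bcirc(A * B) = bcirc A * bcirc B.\<close>
definition tprod :: "nat \<Rightarrow> nat \<Rightarrow> nat \<Rightarrow> nat \<Rightarrow> tensor \<Rightarrow> tensor \<Rightarrow> tensor" where
  "tprod m n q p A B = unbcirc m p (bcirc m n p A * bcirc n q p B)"

definition tid :: tensor where
  "tid = (\<lambda>i j k. if k = 0 \<and> i = j then 1 else 0)"

fun tpow :: "nat \<Rightarrow> nat \<Rightarrow> tensor \<Rightarrow> nat \<Rightarrow> tensor" where
  "tpow m p A 0 = tid"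
| "tpow m p A (Suc k) = tprod m m m p (tpow m p A k) A"

definition tscale :: "real \<Rightarrow> tensor \<Rightarrow> tensor" where
  "tscale c A = (\<lambda>i j k. complex_of_real c * A i j k)"

definition tzero :: tensor where
  "tzero = (\<lambda>i j k. 0)"

definition texp :: "nat \<Rightarrow> nat \<Rightarrow> tensor \<Rightarrow> tensor" where
  "texp m p A = (\<lambda>i j k. (\<Sum>n. tpow m p A n i j k / of_nat (fact n)))"

text \<open>Conjugate transpose: conjugate-transpose every slice and reverse slices 2..p.\<close>
definition tH :: "nat \<Rightarrow> tensor \<Rightarrow> tensor" where
  "tH p A = (\<lambda>i j k. cnj (A j i ((p - k) mod p)))"

definition thermitian :: "nat \<Rightarrow> nat \<Rightarrow> tensor \<Rightarrow> bool" where
  "thermitian m p A \<longleftrightarrow> (\<forall>i<m. \<forall>j<m. \<forall>k<p. tH p A i j k = A i j k)"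

definition psd :: "nat \<Rightarrow> complex mat \<Rightarrow> bool" where
  "psd n M \<longleftrightarrow> M \<in> carrier_mat n n \<and>
     (\<forall>x \<in> carrier_vec n. let q = (\<Sum>i<n. \<Sum>j<n. cnj (x $ i) * M $$ (i, j) * x $ j)
                           in Im q = 0 \<and> Re q \<ge> 0)"

definition tle :: "nat \<Rightarrow> nat \<Rightarrow> tensor \<Rightarrow> tensor \<Rightarrow> bool" where
  "tle m p A B \<longleftrightarrow> psd (m * p) (bcirc m m p (\<lambda>i j k. B i j k - A i j k))"

definition texpect :: "'a measure \<Rightarrow> ('a \<Rightarrow> tensor) \<Rightarrow> tensor" where
  "texpect M X = (\<lambda>i j k. integral\<^sup>L M (\<lambda>\<omega>. X \<omega> i j k))"

end

theory Submission
  imports Defs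
begin


definition bidx :: "nat \<Rightarrow> nat \<Rightarrow> nat \<Rightarrow> nat \<Rightarrow> nat" where
  "bidx m p a b = (a div m + p - b div m) mod p"

definition bf :: "nat \<Rightarrow> nat \<Rightarrow> tensor \<Rightarrow> nat \<Rightarrow> nat \<Rightarrow> complex" where
  "bf m p T a b = T (a mod m) (b mod m) (bidx m p a b)"

definition mmul :: "nat \<Rightarrow> (nat \<Rightarrow> nat \<Rightarrow> complex) \<Rightarrow> (nat \<Rightarrow> nat \<Rightarrow> complex) \<Rightarrow> nat \<Rightarrow> nat \<Rightarrow> complex" where
  "mmul N F G a b = (\<Sum>c<N. F a c * G c b)"

fun mpow :: "nat \<Rightarrow> (nat \<Rightarrow> nat \<Rightarrow> complex) \<Rightarrow> nat \<Rightarrow> nat \<Rightarrow> nat \<Rightarrow> complex" where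
  "mpow N F 0 = (\<lambda>a b. if a = b then 1 else 0)"
| "mpow N F (Suc n) = mmul N (mpow N F n) F"

lemma bcirc_index:
  assumes "a < m * p" "b < m * p"
  shows "bcirc m m p T $$ (a, b) = bf m p T a b"
  using assms by (simp add: bcirc_def bf_def bidx_def)

lemma sum_shift_mod:
  fixes h :: "nat \<Rightarrow> 'b::comm_monoid_add"
  assumes "0 < p"
  shows "(\<Sum>u<p. h ((u + k) mod p)) = (\<Sum>u<p. h u)"
proof (induction k arbitrary: h)
  case 0
  then show ?case by (intro sum.cong) auto
next
  case (Suc k)
  have "(\<Sum>u<p. h ((u + Suc k) mod p)) = (\<Sum>u<p. (\<lambda>v. h ((v + 1) mod p)) ((u + k) mod p))"
    by (intro sum.cong) (auto simp: mod_Suc_eq)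
  also have "\<dots> = (\<Sum>u<p. h ((u + 1) mod p))"
    by (rule Suc.IH)
  also have "\<dots> = (\<Sum>u<p. h u)"
  proof -
    obtain q where q: "p = Suc q" using assms by (cases p) auto
    have "(\<Sum>u<Suc q. h ((u + 1) mod Suc q)) = (\<Sum>u<q. h ((u + 1) mod Suc q)) + h ((q+1) mod Suc q)"
      by simp
    also have "\<dots> = (\<Sum>u<q. h (Suc u)) + h 0" by simp
    also have "\<dots> = (\<Sum>u<Suc q. h u)" by (subst sum.lessThan_Suc_shift) (simp add: add.commute)
    finally show ?thesis using q by simp
  qed
  finally show ?case .
qed

lemma modp: "(x + (p::int) - y) mod p = (x - y) mod p"
proof -
  have "x + p - y = (x - y) + p" by simp
  then show ?thesis by (simp only: mod_add_self2)
qed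
lemma m2: fixes w b a p :: nat assumes "w < p" "b < p" "a < p" shows "(a + p - (w+b) mod p) mod p = ((a+p-b) mod p + p - w) mod p"
proof -
  have p0: "0 < p" using assms by simp
  have r: "(w+b) mod p < p" using p0 by simp
  have g: "(a+p-b) mod p < p" using p0 by simp
  have "int ((a + p - (w+b) mod p) mod p) = (int a + int p - int ((w+b) mod p)) mod int p"
    using r by (simp add: zmod_int of_nat_diff)
  also have "\<dots> = (int a - int ((w+b) mod p)) mod int p"
    by (rule modp)
  also have "\<dots> = (int a - (int w + int b)) mod int p"
    by (metis mod_diff_right_eq of_nat_add zmod_int)
  also have "\<dots> = ((int a - int b) mod int p - int w) mod int p"
    by (metis diff_diff_eq add.commute mod_diff_left_eq)
  also have "(int a - int b) mod int p = int ((a+p-b) mod p)"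
  proof -
    have "int ((a+p-b) mod p) = (int a + int p - int b) mod int p"
      using assms by (simp add: zmod_int of_nat_diff)
    also have "\<dots> = (int a - int b) mod int p"
      by (rule modp)
    finally show ?thesis by simp
  qed
  also have "(int ((a+p-b) mod p) - int w) mod int p = int (((a+p-b) mod p + p - w) mod p)"
  proof -
    have "int (((a+p-b) mod p + p - w) mod p) = (int ((a+p-b) mod p) + int p - int w) mod int p"
      using assms by (simp add: zmod_int of_nat_diff)
    also have "\<dots> = (int ((a+p-b) mod p) - int w) mod int p"
      by (rule modp)
    finally show ?thesis by simp
  qed
  finally show ?thesis by simp
qed

lemma m3: fixes a b p :: nat assumes "a < p" "b < p" shows "(p - (b + p - a) mod p) mod p = (a + p - b) mod p"
proof -
  have p0: "0 < p" using assms by simp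
  define r where "r = (b + p - a) mod p"
  have r: "r < p" using p0 by (simp add: r_def)
  have "int ((p - r) mod p) = int (p - r) mod int p"
    by (rule of_nat_mod)
  also have "int (p - r) = int p - int r"
    using r by (intro of_nat_diff) simp
  also have "(int p - int r) mod int p = (0 - int r) mod int p"
    using modp[of 0 "int p" "int r"] by simp
  also have "int r = int (b + p - a) mod int p" unfolding r_def by (rule of_nat_mod)
  also have "(0 - int (b + p - a) mod int p) mod int p = (0 - int (b + p - a)) mod int p"
    by (rule mod_diff_right_eq)
  also have "int (b + p - a) = int b + int p - int a" using assms by (simp add: of_nat_diff)
  also have "(0 - (int b + int p - int a)) mod int p = (int a + int p - int b) mod int p"
  proof -
    have "0 - (int b + int p - int a) = (int a + int p - int b) + (- 2) * int p" by simp
    then show ?thesis by (metis mod_mult_self1)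
  qed
  also have "\<dots> = int ((a + p - b) mod p)"
    using assms by (simp add: zmod_int of_nat_diff)
  finally show ?thesis unfolding r_def by simp
qed

lemma m1: fixes w b p :: nat assumes "w < p" "b < p" shows "((w+b) mod p + p - b) mod p = w"
  by (smt (verit, best) Nat.diff_cancel add_diff_inverse_nat add_less_mono
    assms(1,2) diff_add_inverse2 less_diff_conv less_imp_diff_less mod_if
    mod_less nat_add_left_cancel_less nat_arith.add1 not_add_less2)

lemma blocks: fixes h :: "nat \<Rightarrow> 'b::comm_monoid_add" shows "(\<Sum>c<m*p. h c) = (\<Sum>u<p. \<Sum>v<m. h (u*m+v))"
proof (induction p)
  case 0 then show ?case by simp
next
  case (Suc p)
  have eq: "{..<m * Suc p} = {..<m*p} \<union> {m*p..<m*p+m}" by auto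
  have "(\<Sum>c<m*Suc p. h c) = (\<Sum>c<m*p. h c) + (\<Sum>c\<in>{m*p..<m*p+m}. h c)"
    unfolding eq by (rule sum.union_disjoint) auto
  also have "(\<Sum>c\<in>{m*p..<m*p+m}. h c) = (\<Sum>v<m. h (p*m+v))"
  proof -
    have "(\<Sum>c\<in>{m*p..<m*p+m}. h c) = (\<Sum>c\<in>{0+m*p..<m+m*p}. h c)" by (simp add: add.commute)
    also have "\<dots> = (\<Sum>v\<in>{0..<m}. h (v + m*p))" by (rule sum.shift_bounds_nat_ivl)
    finally show ?thesis by (simp add: lessThan_atLeast0 add.commute mult.commute)
  qed
  finally show ?case using Suc by (simp add: mult.commute)
qed

lemma div_lt: fixes a m p :: nat assumes "a < m * p" shows "a div m < p"
proof -
  have "0 < m" using assms by (cases m) auto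
  then show ?thesis using assms by (simp add: div_less_iff_less_mult mult.commute)
qed

lemma prod_bc:
  assumes a: "a < m * p" and b: "b < m * p"
  shows "mmul (m*p) (bf m p S) (bf m p T) a b
       = mmul (m*p) (bf m p S) (bf m p T) (bidx m p a b * m + a mod m) (b mod m)"
proof -
  have m0: "0 < m" and p0: "0 < p" using a by (auto intro: Nat.gr0I)
  define al where "al = a div m"
  define be where "be = b div m"
  define ga where "ga = bidx m p a b"
  have al: "al < p" using a by (simp add: al_def div_lt)
  have be: "be < p" using b by (simp add: be_def div_lt)
  have ga: "ga < p" using p0 by (simp add: ga_def bidx_def)
  have ga_eq: "ga = (al + p - be) mod p" by (simp add: ga_def bidx_def al_def be_def)
  have i0m: "(ga * m + a mod m) mod m = a mod m" by simp
  have i0d: "(ga * m + a mod m) div m = ga" using m0 by simp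
  have L: "mmul (m*p) (bf m p S) (bf m p T) a b = (\<Sum>v<m. \<Sum>u<p.
      S (a mod m) v ((al + p - u) mod p) * T v (b mod m) ((u + p - be) mod p))"
    unfolding mmul_def blocks
    by (subst sum.swap) (simp add: bf_def bidx_def al_def be_def m0)
  have R: "mmul (m*p) (bf m p S) (bf m p T) (ga * m + a mod m) (b mod m) = (\<Sum>v<m. \<Sum>w<p.
      S (a mod m) v ((ga + p - w) mod p) * T v (b mod m) w)"
    unfolding mmul_def blocks
    apply (subst sum.swap)
    apply (intro sum.cong refl)
    using m0 ga by (simp add: bf_def bidx_def i0m i0d)
  have "(\<Sum>u<p. S (a mod m) v ((al + p - u) mod p) * T v (b mod m) ((u + p - be) mod p))
      = (\<Sum>w<p. S (a mod m) v ((ga + p - w) mod p) * T v (b mod m) w)" for v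
  proof -
    have "(\<Sum>u<p. S (a mod m) v ((al + p - u) mod p) * T v (b mod m) ((u + p - be) mod p))
      = (\<Sum>w<p. (\<lambda>u. S (a mod m) v ((al + p - u) mod p) * T v (b mod m) ((u + p - be) mod p)) ((w + be) mod p))"
      using sum_shift_mod[OF p0, symmetric] by blast
    also have "\<dots> = (\<Sum>w<p. S (a mod m) v ((ga + p - w) mod p) * T v (b mod m) w)"
      apply (intro sum.cong refl)
      using m1 m2 al be ga_eq by simp
    finally show ?thesis .
  qed
  then show ?thesis unfolding ga_def[symmetric] L R by simp
qed


lemma bcirc_dims: "bcirc m n p T \<in> carrier_mat (m*p) (n*p)"
  by (simp add: bcirc_def)

lemma bcirc_mult:
  assumes "i < m * p" "j < m * p"
  shows "(bcirc m m p S * bcirc m m p T) $$ (i, j) = mmul (m*p) (bf m p S) (bf m p T) i j"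
proof -
  have "(bcirc m m p S * bcirc m m p T) $$ (i, j) = row (bcirc m m p S) i \<bullet> col (bcirc m m p T) j"
    using assms by (simp add: bcirc_def)
  also have "\<dots> = (\<Sum>c<m*p. bcirc m m p S $$ (i, c) * bcirc m m p T $$ (c, j))"
    using assms by (simp add: scalar_prod_def bcirc_def lessThan_atLeast0)
  also have "\<dots> = mmul (m*p) (bf m p S) (bf m p T) i j"
    unfolding mmul_def using assms by (intro sum.cong refl) (simp add: bcirc_index)
  finally show ?thesis .
qed

lemma bidx_zero:
  assumes a: "a < m * p" and b: "b < m * p"
  shows "(bidx m p a b = 0 \<and> a mod m = b mod m) \<longleftrightarrow> a = b"
proof
  assume h: "bidx m p a b = 0 \<and> a mod m = b mod m"
  define x where "x = a div m"
  define y where "y = b div m"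
  have al: "x < p" unfolding x_def using a by (rule div_lt)
  have be: "y < p" unfolding y_def using b by (rule div_lt)
  have z: "(x + p - y) mod p = 0" using h by (simp add: bidx_def x_def y_def)
  have xy: "x = y"
  proof (rule ccontr)
    assume ne: "x \<noteq> y"
    show False
    proof (cases "x < y")
      case True
      have "x + p - y < p" using True be by linarith
      then have "(x + p - y) mod p = x + p - y" by (rule mod_less)
      then show False using z True be by linarith
    next
      case False
      have "x + p - y = (x - y) + p" using False by linarith
      then have "(x + p - y) mod p = (x - y) mod p" by simp
      also have "(x - y) mod p = x - y" using al by (intro mod_less) linarith
      finally show False using z False ne by linarith
    qed
  qed
  have "a = x * m + a mod m" unfolding x_def by simp
  moreover have "b = y * m + b mod m" unfolding y_def by simp
  ultimately show "a = b" using h xy by metis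
next
  assume "a = b"
  then show "bidx m p a b = 0 \<and> a mod m = b mod m" by (simp add: bidx_def)
qed

lemma tpow_bf:
  assumes "a < m * p" "b < m * p"
  shows "bf m p (tpow m p T n) a b = mpow (m*p) (bf m p T) n a b"
  using assms
proof (induction n arbitrary: a b)
  case 0
  have "bf m p (tpow m p T 0) a b = (if bidx m p a b = 0 \<and> a mod m = b mod m then 1 else 0)"
    by (simp add: bf_def tid_def)
  also have "\<dots> = (if a = b then 1 else 0)" by (simp only: bidx_zero[OF 0(1,2)])
  finally show ?case by simp
next
  case (Suc n)
  have m0: "0 < m" and p0: "0 < p" using Suc.prems by (auto intro: Nat.gr0I)
  define i0 where "i0 = bidx m p a b * m + a mod m"
  have "bidx m p a b < p" using p0 by (simp add: bidx_def)
  then have i0: "i0 < m * p"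
  proof -
    assume bl: "bidx m p a b < p"
    have "i0 < bidx m p a b * m + m" unfolding i0_def using m0 by simp
    also have "\<dots> = (bidx m p a b + 1) * m" by simp
    also have "\<dots> \<le> p * m" using bl by (intro mult_right_mono) auto
    finally show ?thesis by (simp add: mult.commute)
  qed
  have b0: "b mod m < m * p" using Suc.prems(2) mod_less_eq_dividend[of b m] by linarith
  have "bf m p (tpow m p T (Suc n)) a b = (bcirc m m p (tpow m p T n) * bcirc m m p T) $$ (i0, b mod m)"
    by (simp add: bf_def tprod_def unbcirc_def i0_def)
  also have "\<dots> = mmul (m*p) (bf m p (tpow m p T n)) (bf m p T) i0 (b mod m)"
    using i0 b0 by (rule bcirc_mult)
  also have "\<dots> = mmul (m*p) (bf m p (tpow m p T n)) (bf m p T) a b"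
    unfolding i0_def by (rule prod_bc[OF Suc.prems, symmetric])
  also have "\<dots> = mpow (m*p) (bf m p T) (Suc n) a b"
    unfolding mpow.simps mmul_def using Suc.IH Suc.prems by simp
  finally show ?case .
qed


lemma mmul_cong:
  assumes "\<And>c. c < N \<Longrightarrow> F a c = F' a c" "\<And>c. c < N \<Longrightarrow> G c b = G' c b"
  shows "mmul N F G a b = mmul N F' G' a b"
  unfolding mmul_def using assms by (intro sum.cong) auto

lemma mmul_assoc: "mmul N (mmul N F G) H a b = mmul N F (mmul N G H) a b"
  unfolding mmul_def sum_distrib_left sum_distrib_right
  by (subst sum.swap) (simp add: mult.assoc)

lemma mmul_id_right: assumes "b < N" shows "mmul N P (mpow N F 0) a b = P a b"
proof -
  have "mmul N P (mpow N F 0) a b = (\<Sum>c<N. if c = b then P a c else 0)"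
    unfolding mmul_def by (intro sum.cong) auto
  then show ?thesis using assms by simp
qed

lemma mmul_id_left: assumes "a < N" shows "mmul N (mpow N F 0) P a b = P a b"
proof -
  have "mmul N (mpow N F 0) P a b = (\<Sum>c<N. if a = c then P c b else 0)"
    unfolding mmul_def by (intro sum.cong) auto
  then show ?thesis using assms by simp
qed

lemma mpow_add:
  assumes "b < N"
  shows "mpow N F (j + k) a b = mmul N (mpow N F j) (mpow N F k) a b"
  using assms
proof (induction k arbitrary: b)
  case 0
  then show ?case using mmul_id_right[of b N "mpow N F j" F a] by simp
next
  case (Suc k)
  have "mpow N F (j + Suc k) a b = mmul N (mpow N F (j + k)) F a b" by simp
  also have "\<dots> = mmul N (mmul N (mpow N F j) (mpow N F k)) F a b"
    using Suc.IH by (intro mmul_cong) auto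
  also have "\<dots> = mmul N (mpow N F j) (mmul N (mpow N F k) F) a b"
    by (rule mmul_assoc)
  finally show ?case by simp
qed

lemma mpow_Suc_left:
  assumes "a < N" "b < N"
  shows "mpow N F (Suc n) a b = mmul N F (mpow N F n) a b"
proof -
  have "mpow N F (Suc n) a b = mpow N F (1 + n) a b" by simp
  also have "\<dots> = mmul N (mpow N F 1) (mpow N F n) a b" using assms(2) by (rule mpow_add)
  also have "\<dots> = mmul N F (mpow N F n) a b"
  proof -
    have "\<forall>c. mmul N (mpow N F 0) F a c = F a c" using mmul_id_left[OF assms(1)] by blast
    then show ?thesis by (intro mmul_cong) auto
  qed
  finally show ?thesis .
qed

definition herm :: "nat \<Rightarrow> (nat \<Rightarrow> nat \<Rightarrow> complex) \<Rightarrow> bool" where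
  "herm N F \<longleftrightarrow> (\<forall>a<N. \<forall>b<N. F b a = cnj (F a b))"

lemma herm_mpow:
  assumes "herm N F"
  shows "herm N (mpow N F n)"
proof (induction n)
  case 0
  then show ?case by (simp add: herm_def)
next
  case (Suc n)
  show ?case unfolding herm_def
  proof (intro allI impI)
    fix a b assume ab: "a < N" "b < N"
    have "mpow N F (Suc n) b a = (\<Sum>c<N. mpow N F n b c * F c a)" by (simp add: mmul_def)
    also have "\<dots> = (\<Sum>c<N. cnj (F a c * mpow N F n c b))"
    proof (intro sum.cong refl)
      fix c assume c: "c \<in> {..<N}"
      have "mpow N F n b c = cnj (mpow N F n c b)" using Suc c ab unfolding herm_def by blast
      moreover have "F c a = cnj (F a c)" using assms c ab unfolding herm_def by blast
      ultimately show "mpow N F n b c * F c a = cnj (F a c * mpow N F n c b)" by simp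
    qed
    also have "\<dots> = cnj (mmul N F (mpow N F n) a b)" by (simp add: mmul_def)
    also have "\<dots> = cnj (mpow N F (Suc n) a b)" using mpow_Suc_left[OF ab] by simp
    finally show "mpow N F (Suc n) b a = cnj (mpow N F (Suc n) a b)" .
  qed
qed

lemma herm_bf:
  assumes "thermitian m p T"
  shows "herm (m*p) (bf m p T)"
  unfolding herm_def
proof (intro allI impI)
  fix a b assume a: "a < m * p" and b: "b < m * p"
  have m0: "0 < m" and p0: "0 < p" using a by (auto intro: Nat.gr0I)
  have al: "a div m < p" using a by (rule div_lt)
  have be: "b div m < p" using b by (rule div_lt)
  have k: "bidx m p b a < p" using p0 by (simp add: bidx_def)
  have e: "(p - bidx m p b a) mod p = bidx m p a b"
    unfolding bidx_def using al be by (rule m3)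
  have "T (b mod m) (a mod m) (bidx m p b a) = tH p T (b mod m) (a mod m) (bidx m p b a)"
    using assms k m0 by (simp add: thermitian_def)
  also have "\<dots> = cnj (T (a mod m) (b mod m) (bidx m p a b))"
    by (simp add: tH_def e)
  finally show "bf m p T b a = cnj (bf m p T a b)" by (simp add: bf_def)
qed



lemma herm_sq_diag:
  assumes "herm N P" "a < N"
  shows "mmul N P P a a = of_real (\<Sum>c<N. (norm (P a c))\<^sup>2)"
proof -
  have "mmul N P P a a = (\<Sum>c<N. of_real ((norm (P a c))\<^sup>2))"
    unfolding mmul_def
  proof (intro sum.cong refl)
    fix c assume "c \<in> {..<N}"
    then have "P c a = cnj (P a c)" using assms unfolding herm_def by blast
    then show "P a c * P c a = of_real ((norm (P a c))\<^sup>2)"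
      by (metis complex_norm_square of_real_power)
  qed
  then show ?thesis by simp
qed

lemma herm_sq_diag':
  assumes "herm N Q" "b < N"
  shows "mmul N Q Q b b = of_real (\<Sum>c<N. (norm (Q c b))\<^sup>2)"
proof -
  have "mmul N Q Q b b = (\<Sum>c<N. of_real ((norm (Q c b))\<^sup>2))"
    unfolding mmul_def
  proof (intro sum.cong refl)
    fix c assume "c \<in> {..<N}"
    then have "Q b c = cnj (Q c b)" using assms unfolding herm_def by blast
    then show "Q b c * Q c b = of_real ((norm (Q c b))\<^sup>2)"
      by (metis complex_norm_square of_real_power mult.commute)
  qed
  then show ?thesis by simp
qed

lemma mmul_norm_bound:
  assumes "herm N P" "herm N Q" "a < N" "b < N"
  shows "norm (mmul N P Q a b) \<le> (Re (mmul N P P a a) + Re (mmul N Q Q b b)) / 2"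
proof -
  have "norm (mmul N P Q a b) \<le> (\<Sum>c<N. norm (P a c) * norm (Q c b))"
    unfolding mmul_def by (rule order_trans[OF norm_sum]) (simp add: norm_mult)
  also have "\<dots> \<le> (\<Sum>c<N. ((norm (P a c))\<^sup>2 + (norm (Q c b))\<^sup>2) / 2)"
  proof (intro sum_mono)
    fix c
    have "0 \<le> (norm (P a c) - norm (Q c b))\<^sup>2" by simp
    then show "norm (P a c) * norm (Q c b) \<le> ((norm (P a c))\<^sup>2 + (norm (Q c b))\<^sup>2) / 2"
      by (simp add: power2_eq_square algebra_simps)
  qed
  also have "\<dots> = ((\<Sum>c<N. (norm (P a c))\<^sup>2) + (\<Sum>c<N. (norm (Q c b))\<^sup>2)) / 2"
    by (simp only: sum_divide_distrib[symmetric] sum.distrib)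
  also have "\<dots> = (Re (mmul N P P a a) + Re (mmul N Q Q b b)) / 2"
    using herm_sq_diag[OF assms(1,3)] herm_sq_diag'[OF assms(2,4)] by simp
  finally show ?thesis .
qed

lemma mpow_norm_bound:
  assumes "herm N F" "a < N" "b < N"
  shows "norm (mpow N F n a b) \<le>
    (Re (mpow N F (2 * (n div 2)) a a) + Re (mpow N F (2 * (n - n div 2)) b b)) / 2"
proof -
  define j where "j = n div 2"
  define k where "k = n - n div 2"
  have "mpow N F n a b = mpow N F (j + k) a b" by (simp add: j_def k_def)
  also have "\<dots> = mmul N (mpow N F j) (mpow N F k) a b" using assms(3) by (rule mpow_add)
  finally have e: "mpow N F n a b = mmul N (mpow N F j) (mpow N F k) a b" .
  have ej: "mpow N F (2 * j) a a = mmul N (mpow N F j) (mpow N F j) a a"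
    using mpow_add[OF assms(2), of F j j a] by (simp add: mult_2)
  have ek: "mpow N F (2 * k) b b = mmul N (mpow N F k) (mpow N F k) b b"
    using mpow_add[OF assms(3), of F k k b] by (simp add: mult_2)
  have "norm (mpow N F n a b) \<le> (Re (mpow N F (2 * j) a a) + Re (mpow N F (2 * k) b b)) / 2"
    unfolding e ej ek
    by (rule mmul_norm_bound[OF herm_mpow[OF assms(1)] herm_mpow[OF assms(1)] assms(2,3)])
  then show ?thesis by (simp only: j_def k_def)
qed

lemma mpow_crude:
  assumes "\<And>c b. c < N \<Longrightarrow> b < N \<Longrightarrow> norm (F c b) \<le> K" "0 \<le> K" "b < N"
  shows "norm (mpow N F n a b) \<le> (real N * K + 1) ^ n"
  using assms(3)
proof (induction n arbitrary: b)
  case 0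
  then show ?case by simp
next
  case (Suc n)
  have "norm (mpow N F (Suc n) a b) \<le> (\<Sum>c<N. norm (mpow N F n a c) * norm (F c b))"
    unfolding mpow.simps mmul_def by (rule order_trans[OF norm_sum]) (simp add: norm_mult)
  also have "\<dots> \<le> (\<Sum>c<N. (real N * K + 1) ^ n * K)"
    using Suc assms(1,2) by (intro sum_mono mult_mono) auto
  also have "\<dots> = real N * K * (real N * K + 1) ^ n" by simp
  also have "\<dots> \<le> (real N * K + 1) * (real N * K + 1) ^ n"
    using assms(2) by (intro mult_right_mono) auto
  finally show ?case by simp
qed

definition qf :: "nat \<Rightarrow> (nat \<Rightarrow> nat \<Rightarrow> complex) \<Rightarrow> (nat \<Rightarrow> complex) \<Rightarrow> complex" where
  "qf N F x = (\<Sum>i<N. \<Sum>j<N. cnj (x i) * F i j * x j)"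

lemma qf_sq:
  assumes "herm N P"
  shows "qf N (mmul N P P) x = of_real (\<Sum>c<N. (norm (\<Sum>j<N. P c j * x j))\<^sup>2)"
proof -
  have "qf N (mmul N P P) x = (\<Sum>i<N. \<Sum>j<N. \<Sum>c<N. cnj (x i) * P i c * (P c j * x j))"
    unfolding qf_def mmul_def by (simp add: sum_distrib_left sum_distrib_right mult.assoc)
  also have "\<dots> = (\<Sum>i<N. \<Sum>c<N. \<Sum>j<N. cnj (x i) * P i c * (P c j * x j))"
    by (rule sum.cong[OF refl], rule sum.swap)
  also have "\<dots> = (\<Sum>c<N. \<Sum>i<N. \<Sum>j<N. cnj (x i) * P i c * (P c j * x j))"
    by (rule sum.swap)
  also have "\<dots> = (\<Sum>c<N. (\<Sum>i<N. cnj (x i) * P i c) * (\<Sum>j<N. P c j * x j))"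
    by (simp add: sum_product)
  also have "\<dots> = (\<Sum>c<N. cnj (\<Sum>j<N. P c j * x j) * (\<Sum>j<N. P c j * x j))"
  proof (intro sum.cong refl)
    fix c assume c: "c \<in> {..<N}"
    have "(\<Sum>i<N. cnj (x i) * P i c) = (\<Sum>i<N. cnj (P c i * x i))"
    proof (intro sum.cong refl)
      fix i assume "i \<in> {..<N}"
      then have "P i c = cnj (P c i)" using assms c unfolding herm_def by blast
      then show "cnj (x i) * P i c = cnj (P c i * x i)" by (simp add: mult.commute)
    qed
    also have "\<dots> = cnj (\<Sum>j<N. P c j * x j)" by simp
    finally have "(\<Sum>i<N. cnj (x i) * P i c) = cnj (\<Sum>j<N. P c j * x j)" .
    then show "(\<Sum>i<N. cnj (x i) * P i c) * (\<Sum>j<N. P c j * x j) = cnj (\<Sum>j<N. P c j * x j) * (\<Sum>j<N. P c j * x j)"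
      by simp
  qed
  also have "\<dots> = (\<Sum>c<N. of_real ((norm (\<Sum>j<N. P c j * x j))\<^sup>2))"
    by (rule sum.cong[OF refl]) (metis complex_norm_square of_real_power mult.commute)
  also have "\<dots> = of_real (\<Sum>c<N. (norm (\<Sum>j<N. P c j * x j))\<^sup>2)"
    by simp
  finally show ?thesis .
qed



lemma bf_tscale: "bf m p (tscale c T) a b = of_real c * bf m p T a b"
  by (simp add: bf_def tscale_def)

lemma bf_texpect: "bf m p (texpect M Y) a b = (LINT \<omega>|M. bf m p (Y \<omega>) a b)"
  by (simp add: bf_def texpect_def)

lemma bf_texp:
  assumes "a < m * p" "b < m * p"
  shows "bf m p (texp m p T) a b = (\<Sum>n. mpow (m*p) (bf m p T) n a b / of_nat (fact n))"
proof -
  have "bf m p (texp m p T) a b = (\<Sum>n. bf m p (tpow m p T n) a b / of_nat (fact n))"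
    by (simp add: bf_def texp_def)
  also have "\<dots> = (\<Sum>n. mpow (m*p) (bf m p T) n a b / of_nat (fact n))"
    using tpow_bf[OF assms] by simp
  finally show ?thesis .
qed

lemma mpow_scale: "mpow N (\<lambda>a b. c * F a b) n a b = c ^ n * mpow N F n a b"
proof (induction n arbitrary: b)
  case 0
  then show ?case by simp
next
  case (Suc n)
  show ?case by (simp add: mmul_def Suc sum_distrib_left mult_ac)
qed

lemma mpow_cong:
  assumes "\<And>c d. c < N \<Longrightarrow> d < N \<Longrightarrow> F c d = G c d" "b < N"
  shows "mpow N F n a b = mpow N G n a b"
  using assms(2)
proof (induction n arbitrary: b)
  case 0
  then show ?case by simp
next
  case (Suc n)
  show ?case unfolding mpow.simps mmul_def
    using Suc assms(1) by (intro sum.cong refl) auto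
qed

lemma mpow_sq_pow:
  assumes "b < N"
  shows "mpow N (mpow N C 2) n a b = mpow N C (2 * n) a b"
  using assms
proof (induction n arbitrary: b)
  case 0
  then show ?case by simp
next
  case (Suc n)
  have "mpow N (mpow N C 2) (Suc n) a b = mmul N (mpow N C (2 * n)) (mpow N C 2) a b"
    unfolding mpow.simps(2)[of N "mpow N C 2" n] mmul_def using Suc.IH by (intro sum.cong refl) auto
  also have "\<dots> = mpow N C (2 * n + 2) a b" using mpow_add[OF Suc.prems, of C "2*n" 2 a] by simp
  finally show ?case by simp
qed

lemma mpow_one: assumes "a < N" shows "mpow N F 1 a b = F a b"
  using mmul_id_left[OF assms, of F F b] by simp

lemma qf_diff: "qf N (\<lambda>a b. F a b - G a b) x = qf N F x - qf N G x"
  by (simp add: qf_def algebra_simps sum_subtractf)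

lemma qf_scale: "qf N (\<lambda>a b. c * F a b) x = c * qf N F x"
  by (simp add: qf_def sum_distrib_left mult_ac)

lemma qf_cong:
  assumes "\<And>a b. a < N \<Longrightarrow> b < N \<Longrightarrow> F a b = G a b"
  shows "qf N F x = qf N G x"
  unfolding qf_def using assms by (intro sum.cong refl) auto

lemma qf_summable:
  assumes "\<And>a b. a < N \<Longrightarrow> b < N \<Longrightarrow> summable (\<lambda>n. g n a b)"
  shows "summable (\<lambda>n. qf N (g n) x)"
  unfolding qf_def
  using assms by (intro summable_sum summable_mult summable_mult2) auto

lemma qf_suminf:
  assumes "\<And>a b. a < N \<Longrightarrow> b < N \<Longrightarrow> summable (\<lambda>n. g n a b)"
  shows "qf N (\<lambda>a b. \<Sum>n. g n a b) x = (\<Sum>n. qf N (g n) x)"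
proof -
  have "qf N (\<lambda>a b. \<Sum>n. g n a b) x = (\<Sum>i<N. \<Sum>j<N. \<Sum>n. cnj (x i) * g n i j * x j)"
    unfolding qf_def
  proof (intro sum.cong refl)
    fix i j assume "i \<in> {..<N}" "j \<in> {..<N}"
    then have s: "summable (\<lambda>n. g n i j)" using assms by auto
    show "cnj (x i) * (\<Sum>n. g n i j) * x j = (\<Sum>n. cnj (x i) * g n i j * x j)"
      using suminf_mult[OF s, of "cnj (x i)"] suminf_mult2[OF summable_mult[OF s], of "cnj (x i)" "x j"]
      by simp
  qed
  also have "\<dots> = (\<Sum>i<N. \<Sum>n. \<Sum>j<N. cnj (x i) * g n i j * x j)"
    using assms by (intro sum.cong refl suminf_sum[symmetric] summable_mult summable_mult2) auto
  also have "\<dots> = (\<Sum>n. \<Sum>i<N. \<Sum>j<N. cnj (x i) * g n i j * x j)"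
    using assms by (intro suminf_sum[symmetric] summable_sum summable_mult summable_mult2) auto
  finally show ?thesis unfolding qf_def .
qed

lemma qf_unit:
  assumes "a < N"
  shows "qf N F (\<lambda>i. unit_vec N a $ i) = F a a"
proof -
  have "qf N F (\<lambda>i. unit_vec N a $ i) = (\<Sum>i<N. \<Sum>j<N. if i = a \<and> j = a then F i j else 0)"
    unfolding qf_def by (intro sum.cong refl) (auto simp: unit_vec_def)
  also have "\<dots> = (\<Sum>i<N. if i = a then F i a else 0)"
    by (intro sum.cong refl) (auto simp: if_distrib cong: if_cong)
  also have "\<dots> = F a a" using assms by simp
  finally show ?thesis .
qed

lemma tle_iff:
  "tle m p S T \<longleftrightarrow> (\<forall>x\<in>carrier_vec (m*p).
     Im (qf (m*p) (\<lambda>a b. bf m p T a b - bf m p S a b) (\<lambda>i. x $ i)) = 0 \<and>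
     0 \<le> Re (qf (m*p) (\<lambda>a b. bf m p T a b - bf m p S a b) (\<lambda>i. x $ i)))"
proof -
  have e: "(\<Sum>i<m*p. \<Sum>j<m*p. cnj (x $ i) * bcirc m m p (\<lambda>i j k. T i j k - S i j k) $$ (i, j) * x $ j)
      = qf (m*p) (\<lambda>a b. bf m p T a b - bf m p S a b) (\<lambda>i. x $ i)" for x :: "complex vec"
    unfolding qf_def by (intro sum.cong refl) (simp add: bcirc_index bf_def)
  show ?thesis unfolding tle_def psd_def Let_def e using bcirc_dims by simp
qed

lemma summable_n_geom:
  fixes t :: real
  assumes "0 \<le> t" "t < 1"
  shows "summable (\<lambda>n. real (Suc n) * t ^ n)"
proof -
  have "summable (\<lambda>n. diffs (\<lambda>n. 1::real) n * t ^ n)"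
    by (rule termdiff_converges[of t 1]) (use assms in auto)
  then show ?thesis by (simp add: diffs_def)
qed

lemma entry_le_total:
  fixes F :: "nat \<Rightarrow> nat \<Rightarrow> complex" and N c d :: nat
  assumes "c < N" "d < N"
  shows "norm (F c d) \<le> (\<Sum>c'<N. \<Sum>d'<N. norm (F c' d'))"
proof -
  have "norm (F c d) \<le> (\<Sum>d'<N. norm (F c d'))"
    by (rule member_le_sum[where f = "\<lambda>d'. norm (F c d')"]) (use assms in auto)
  also have "\<dots> \<le> (\<Sum>c'<N. \<Sum>d'<N. norm (F c' d'))"
    using assms by (intro member_le_sum[where f = "\<lambda>c'. \<Sum>d'<N. norm (F c' d')"]) (auto intro: sum_nonneg)
  finally show ?thesis .
qed

lemma exp_series_summable:
  fixes r :: real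
  assumes "b < N" "0 \<le> r"
  shows "summable (\<lambda>n. norm (mpow N F n a b) * r ^ n / fact n)"
proof -
  define K where "K = (\<Sum>c'<N. \<Sum>d'<N. norm (F c' d'))"
  have K0: "0 \<le> K" unfolding K_def by (intro sum_nonneg) auto
  define R where "R = real N * K + 1"
  have R0: "0 \<le> R" using K0 by (simp add: R_def)
  have bd: "norm (mpow N F n a b) \<le> R ^ n" for n
    unfolding R_def using entry_le_total K0 assms(1) unfolding K_def by (intro mpow_crude) auto
  show ?thesis
  proof (rule summable_comparison_test')
    show "summable (\<lambda>n. (r * R) ^ n /\<^sub>R fact n)" by (rule summable_exp_generic)
    fix n
    have "norm (norm (mpow N F n a b) * r ^ n / fact n) = norm (mpow N F n a b) * r ^ n / fact n"
      using assms(2) by simp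
    also have "\<dots> \<le> R ^ n * r ^ n / fact n"
      using bd assms(2) by (intro divide_right_mono mult_right_mono) auto
    also have "\<dots> = (r * R) ^ n /\<^sub>R fact n" by (simp add: power_mult_distrib field_simps)
    finally show "norm (norm (mpow N F n a b) * r ^ n / fact n) \<le> (r * R) ^ n /\<^sub>R fact n" .
  qed
qed



lemma qf_even:
  assumes "herm N F"
  shows "\<exists>r\<ge>0. qf N (mpow N F (2 * j)) x = of_real r"
proof -
  have "qf N (mpow N F (2 * j)) x = qf N (mmul N (mpow N F j) (mpow N F j)) x"
    by (rule qf_cong) (use mpow_add[of _ N F j j] in \<open>simp add: mult_2\<close>)
  also have "\<dots> = of_real (\<Sum>c<N. (norm (\<Sum>j'<N. mpow N F j c j' * x j'))\<^sup>2)"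
    by (rule qf_sq[OF herm_mpow[OF assms]])
  finally show ?thesis by (intro exI[of _ "\<Sum>c<N. (norm (\<Sum>j'<N. mpow N F j c j' * x j'))\<^sup>2"]) (auto intro: sum_nonneg)
qed

lemma integrable_mpow:
  assumes "prob_space M"
    and "\<forall>k\<ge>1. \<forall>i<m. \<forall>j<m. \<forall>l<p. integrable M (\<lambda>\<omega>. tpow m p (X \<omega>) k i j l)"
    and "a < m * p" "b < m * p"
  shows "integrable M (\<lambda>\<omega>. mpow (m*p) (bf m p (X \<omega>)) n a b)"
proof (cases n)
  case 0
  interpret prob_space M by (rule assms(1))
  show ?thesis using 0 by simp
next
  case (Suc n')
  have m0: "0 < m" and p0: "0 < p" using assms(3) by (auto intro: Nat.gr0I)
  have i1: "a mod m < m" "b mod m < m" using m0 by auto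
  have i2: "bidx m p a b < p" using p0 by (simp add: bidx_def)
  have n1: "1 \<le> n" using Suc by simp
  have "integrable M (\<lambda>\<omega>. tpow m p (X \<omega>) n (a mod m) (b mod m) (bidx m p a b))"
    using assms(2) n1 i1 i2 by blast
  then show ?thesis using tpow_bf[OF assms(3,4)] by (simp only: bf_def)
qed


lemma Im_ofreal_mult: "Im (complex_of_real c * z) = c * Im z"
  by simp

lemma cancel_fact: fixes x F r :: real shows "F \<noteq> 0 \<Longrightarrow> x / F * (F / 2 * r) = x / 2 * r"
  by (simp add: field_simps)

lemma Re_ofreal_mult: "Re (complex_of_real c * z) = c * Re z"
  by simp

theorem lemma6:
  fixes m p :: nat and A :: tensor and M :: "'a measure" and X :: "'a \<Rightarrow> tensor" and t :: real
  assumes "prob_space M"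
    and "thermitian m p A"
    and "\<forall>\<omega>\<in>space M. thermitian m p (X \<omega>)"
    and "\<forall>k\<ge>1. \<forall>i<m. \<forall>j<m. \<forall>l<p. integrable M (\<lambda>\<omega>. tpow m p (X \<omega>) k i j l)"
    and "\<forall>i<m. \<forall>j<m. \<forall>l<p. texpect M X i j l = tzero i j l"
    and "\<forall>k\<ge>2. tle m p (texpect M (\<lambda>\<omega>. tpow m p (X \<omega>) k))
                       (tscale (fact k / 2) (tpow m p A 2))"
    and "0 < t" and "t < 1"
  shows "tle m p (texpect M (\<lambda>\<omega>. texp m p (tscale t (X \<omega>))))
                 (texp m p (tscale (t\<^sup>2 / (2 * (1 - t))) (tpow m p A 2)))"
proof -
  interpret P: prob_space M by (rule assms(1))
  define N where "N = m * p"
  define B where "B \<omega> = bf m p (X \<omega>)" for \<omega>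
  define C where "C = bf m p A"
  define D where "D = mpow N C 2"
  define Ek where "Ek n a b = (LINT \<omega>|M. mpow N (B \<omega>) n a b)" for n a b
  define s where "s = t\<^sup>2 / (2 * (1 - t))"
  have t0: "0 \<le> t" using assms(7) by simp
  have s0: "0 \<le> s" unfolding s_def using assms(7,8) by simp
  have hermB: "herm N (B \<omega>)" if "\<omega> \<in> space M" for \<omega>
    unfolding B_def N_def using herm_bf assms(3) that by blast
  have hermC: "herm N C" unfolding C_def N_def using herm_bf assms(2) by blast
  have Dbf: "bf m p (tpow m p A 2) a b = D a b" if "a < N" "b < N" for a b
    unfolding D_def C_def N_def using tpow_bf that unfolding N_def by blast
  have integ: "integrable M (\<lambda>\<omega>. mpow N (B \<omega>) n a b)" if "a < N" "b < N" for n a b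
    unfolding B_def N_def using integrable_mpow[OF assms(1) assms(4)] that unfolding N_def by blast
  have Ek0: "Ek 0 a b = (if a = b then 1 else 0)" for a b
    by (simp add: Ek_def P.prob_space)
  have Ek1: "Ek 1 a b = 0" if ab: "a < N" "b < N" for a b
  proof -
    have m0: "0 < m" and p0: "0 < p" using ab by (auto simp: N_def intro: Nat.gr0I)
    have "Ek 1 a b = (LINT \<omega>|M. B \<omega> a b)"
      unfolding Ek_def using mpow_one[OF ab(1)] by simp
    also have "\<dots> = bf m p (texpect M X) a b" by (simp add: bf_texpect B_def)
    also have "\<dots> = 0"
      using assms(5) m0 p0 by (simp add: bf_def bidx_def tzero_def)
    finally show ?thesis .
  qed
  have hyp: "Im (qf N (\<lambda>a b. of_real (fact k / 2) * D a b - Ek k a b) (\<lambda>i. x $ i)) = 0 \<and>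
      0 \<le> Re (qf N (\<lambda>a b. of_real (fact k / 2) * D a b - Ek k a b) (\<lambda>i. x $ i))"
    if k: "2 \<le> k" and x: "x \<in> carrier_vec N" for k x
  proof -
    have "tle m p (texpect M (\<lambda>\<omega>. tpow m p (X \<omega>) k)) (tscale (fact k / 2) (tpow m p A 2))"
      using assms(6) k by blast
    then have h: "Im (qf N (\<lambda>a b. bf m p (tscale (fact k / 2) (tpow m p A 2)) a b
          - bf m p (texpect M (\<lambda>\<omega>. tpow m p (X \<omega>) k)) a b) (\<lambda>i. x $ i)) = 0 \<and>
      0 \<le> Re (qf N (\<lambda>a b. bf m p (tscale (fact k / 2) (tpow m p A 2)) a b
          - bf m p (texpect M (\<lambda>\<omega>. tpow m p (X \<omega>) k)) a b) (\<lambda>i. x $ i))"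
      unfolding tle_iff N_def using x unfolding N_def by blast
    have e: "qf N (\<lambda>a b. bf m p (tscale (fact k / 2) (tpow m p A 2)) a b
          - bf m p (texpect M (\<lambda>\<omega>. tpow m p (X \<omega>) k)) a b) (\<lambda>i. x $ i)
        = qf N (\<lambda>a b. of_real (fact k / 2) * D a b - Ek k a b) (\<lambda>i. x $ i)"
    proof (rule qf_cong)
      fix a b assume ab: "a < N" "b < N"
      have "bf m p (texpect M (\<lambda>\<omega>. tpow m p (X \<omega>) k)) a b = Ek k a b"
        unfolding bf_texpect Ek_def B_def using tpow_bf ab unfolding N_def by simp
      then show "bf m p (tscale (fact k / 2) (tpow m p A 2)) a b
          - bf m p (texpect M (\<lambda>\<omega>. tpow m p (X \<omega>) k)) a b
          = of_real (fact k / 2) * D a b - Ek k a b"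
        using Dbf[OF ab] by (simp add: bf_tscale)
    qed
    show ?thesis using h unfolding e .
  qed
  define K0 where "K0 = 1 + (\<Sum>a<N. norm (D a a))"
  have K0: "1 \<le> K0" unfolding K0_def by (simp add: sum_nonneg)
  have diag: "Re (Ek k a a) \<le> fact k * K0" if k: "k \<noteq> 1" and a: "a < N" for k a
  proof (cases "k = 0")
    case True
    then show ?thesis using K0 by (simp add: Ek0)
  next
    case False
    then have k2: "2 \<le> k" using k by simp
    have "0 \<le> Re (qf N (\<lambda>a b. of_real (fact k / 2) * D a b - Ek k a b) (\<lambda>i. unit_vec N a $ i))"
      using hyp[OF k2 unit_vec_carrier] by blast
    then have "0 \<le> Re (of_real (fact k / 2) * D a a - Ek k a a)"
      using qf_unit[OF a] by metis
    then have "Re (Ek k a a) \<le> fact k / 2 * Re (D a a)" by simp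
    also have "\<dots> \<le> fact k / 2 * norm (D a a)"
      by (intro mult_left_mono complex_Re_le_cmod) auto
    also have "norm (D a a) \<le> K0"
    proof -
      have "norm (D a a) \<le> (\<Sum>a<N. norm (D a a))"
        by (rule member_le_sum[where f = "\<lambda>a. norm (D a a)"]) (use a in auto)
      then show ?thesis unfolding K0_def by simp
    qed
    then have "fact k / 2 * norm (D a a) \<le> fact k / 2 * K0" by (intro mult_left_mono) auto
    also have "\<dots> \<le> fact k * K0" using K0 by simp
    finally show ?thesis by simp
  qed
  have dom: "(LINT \<omega>|M. norm (mpow N (B \<omega>) n a b)) \<le> real (Suc n) * fact n * K0"
    if ab: "a < N" "b < N" for n a b
  proof -
    define j where "j = 2 * (n div 2)"
    define k where "k = 2 * (n - n div 2)"
    have j1: "j \<noteq> 1" and k1: "k \<noteq> 1" unfolding j_def k_def by presburger+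
    have jn: "j \<le> Suc n" and kn: "k \<le> Suc n" unfolding j_def k_def by presburger+
    have "(LINT \<omega>|M. norm (mpow N (B \<omega>) n a b))
        \<le> (LINT \<omega>|M. (Re (mpow N (B \<omega>) j a a) + Re (mpow N (B \<omega>) k b b)) / 2)"
    proof (rule integral_mono)
      show "integrable M (\<lambda>\<omega>. norm (mpow N (B \<omega>) n a b))" using integ[OF ab] by simp
      show "integrable M (\<lambda>\<omega>. (Re (mpow N (B \<omega>) j a a) + Re (mpow N (B \<omega>) k b b)) / 2)"
        using integ ab by (intro integrable_divide integrable_add integrable_Re) auto
      fix \<omega> assume "\<omega> \<in> space M"
      then show "norm (mpow N (B \<omega>) n a b) \<le> (Re (mpow N (B \<omega>) j a a) + Re (mpow N (B \<omega>) k b b)) / 2"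
        unfolding j_def k_def using mpow_norm_bound[OF hermB ab] by blast
    qed
    also have "\<dots> = (Re (Ek j a a) + Re (Ek k b b)) / 2"
      unfolding Ek_def using integ ab
      by (simp add: integral_divide_zero integral_add integrable_Re integral_Re)
    also have "\<dots> \<le> (fact j * K0 + fact k * K0) / 2"
      using diag[OF j1 ab(1)] diag[OF k1 ab(2)] by simp
    also have "\<dots> \<le> (fact (Suc n) * K0 + fact (Suc n) * K0) / 2"
      using K0 fact_mono[OF jn] fact_mono[OF kn]
      by (intro divide_right_mono add_mono mult_right_mono) auto
    also have "\<dots> = real (Suc n) * fact n * K0" by simp
    finally show ?thesis .
  qed
  define g where "g n a b = (of_real t) ^ n * Ek n a b / of_nat (fact n)" for n a b
  define h where "h n a b = (of_real s) ^ n * mpow N D n a b / of_nat (fact n)" for n a b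
  have LHS: "bf m p (texpect M (\<lambda>\<omega>. texp m p (tscale t (X \<omega>)))) a b = (\<Sum>n. g n a b)
       \<and> summable (\<lambda>n. g n a b)" if ab: "a < N" "b < N" for a b
  proof -
    define f where "f n \<omega> = (of_real t) ^ n * mpow N (B \<omega>) n a b / of_nat (fact n)" for n \<omega>
    have bs: "bf m p (tscale t (X \<omega>)) = (\<lambda>a b. of_real t * B \<omega> a b)" for \<omega>
      by (intro ext) (simp add: bf_tscale B_def)
    have integrand: "bf m p (texp m p (tscale t (X \<omega>))) a b = (\<Sum>n. f n \<omega>)" for \<omega>
    proof -
      have "bf m p (texp m p (tscale t (X \<omega>))) a b
          = (\<Sum>n. mpow N (bf m p (tscale t (X \<omega>))) n a b / of_nat (fact n))"
        using ab unfolding N_def by (rule bf_texp)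
      also have "\<dots> = (\<Sum>n. f n \<omega>)" unfolding bs mpow_scale f_def ..
      finally show ?thesis .
    qed
    have nf2: "norm (f n \<omega>) = norm (mpow N (B \<omega>) n a b) * t ^ n / fact n" for n \<omega>
      unfolding f_def using t0 by (simp add: norm_mult norm_divide norm_power)
    have nf: "norm (f n \<omega>) = t ^ n / fact n * norm (mpow N (B \<omega>) n a b)" for n \<omega>
      unfolding nf2 by simp
    have fi: "integrable M (f n)" for n
      unfolding f_def using integ[OF ab] by (intro integrable_divide integrable_mult_right) auto
    have intf: "(LINT \<omega>|M. f n \<omega>) = g n a b" for n
      unfolding f_def g_def Ek_def by (simp add: integral_divide_zero integral_mult_right_zero)
    have intnf: "(LINT \<omega>|M. norm (f n \<omega>)) \<le> K0 * (real (Suc n) * t ^ n)" for n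
    proof -
      have "(LINT \<omega>|M. norm (f n \<omega>)) = t ^ n / fact n * (LINT \<omega>|M. norm (mpow N (B \<omega>) n a b))"
        unfolding nf by (rule integral_mult_right_zero)
      also have "\<dots> \<le> t ^ n / fact n * (real (Suc n) * fact n * K0)"
        using dom[OF ab] t0 by (intro mult_left_mono) auto
      also have "\<dots> = K0 * (real (Suc n) * t ^ n)" by simp
      finally show ?thesis .
    qed
    have sumnf: "summable (\<lambda>n. LINT \<omega>|M. norm (f n \<omega>))"
    proof (rule summable_comparison_test')
      show "summable (\<lambda>n. K0 * (real (Suc n) * t ^ n))"
        using summable_n_geom[OF t0 assms(8)] by (rule summable_mult)
      fix n show "norm (LINT \<omega>|M. norm (f n \<omega>)) \<le> K0 * (real (Suc n) * t ^ n)"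
        using intnf[of n] by simp
    qed
    have ae: "AE \<omega> in M. summable (\<lambda>n. norm (f n \<omega>))"
      unfolding nf2 using exp_series_summable[OF ab(2) t0] by simp
    have "bf m p (texpect M (\<lambda>\<omega>. texp m p (tscale t (X \<omega>)))) a b = (LINT \<omega>|M. (\<Sum>n. f n \<omega>))"
      by (simp add: bf_texpect integrand)
    also have "\<dots> = (\<Sum>n. LINT \<omega>|M. f n \<omega>)"
      by (rule integral_suminf[OF fi ae sumnf])
    also have "\<dots> = (\<Sum>n. g n a b)" by (simp add: intf)
    finally have e: "bf m p (texpect M (\<lambda>\<omega>. texp m p (tscale t (X \<omega>)))) a b = (\<Sum>n. g n a b)" .
    have "summable (\<lambda>n. g n a b)"
    proof (rule summable_comparison_test')
      show "summable (\<lambda>n. LINT \<omega>|M. norm (f n \<omega>))" by (rule sumnf)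
      fix n show "norm (g n a b) \<le> (LINT \<omega>|M. norm (f n \<omega>))"
        unfolding intf[symmetric] by (rule integral_norm_bound)
    qed
    then show ?thesis using e by blast
  qed
  have RHS: "bf m p (texp m p (tscale s (tpow m p A 2))) a b = (\<Sum>n. h n a b)
       \<and> summable (\<lambda>n. h n a b)" if ab: "a < N" "b < N" for a b
  proof -
    have "bf m p (texp m p (tscale s (tpow m p A 2))) a b
        = (\<Sum>n. mpow N (bf m p (tscale s (tpow m p A 2))) n a b / of_nat (fact n))"
      using ab unfolding N_def by (rule bf_texp)
    also have "\<dots> = (\<Sum>n. mpow N (\<lambda>a b. of_real s * D a b) n a b / of_nat (fact n))"
    proof -
      have "mpow N (bf m p (tscale s (tpow m p A 2))) n a b = mpow N (\<lambda>a b. of_real s * D a b) n a b" for n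
        by (rule mpow_cong) (use ab Dbf in \<open>simp_all add: bf_tscale\<close>)
      then show ?thesis by (simp only:)
    qed
    also have "\<dots> = (\<Sum>n. h n a b)" unfolding h_def mpow_scale ..
    finally have e: "bf m p (texp m p (tscale s (tpow m p A 2))) a b = (\<Sum>n. h n a b)" .
    have "summable (\<lambda>n. norm (h n a b))"
    proof -
      have "norm (h n a b) = norm (mpow N D n a b) * s ^ n / fact n" for n
        unfolding h_def using s0 by (simp add: norm_mult norm_divide norm_power)
      then show ?thesis using exp_series_summable[OF ab(2) s0, of D a] by simp
    qed
    then have "summable (\<lambda>n. h n a b)" by (rule summable_norm_cancel)
    with e show ?thesis by blast
  qed
  show ?thesis
    unfolding s_def[symmetric] tle_iff N_def[symmetric]
  proof (intro ballI)
    fix x :: "complex vec" assume x: "x \<in> carrier_vec N"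
    define xf where "xf = (\<lambda>i. x $ i)"
    define Q where "Q = qf N (\<lambda>a b. bf m p (texp m p (tscale s (tpow m p A 2))) a b
        - bf m p (texpect M (\<lambda>\<omega>. texp m p (tscale t (X \<omega>)))) a b) xf"
    have sh: "summable (\<lambda>n. qf N (h n) xf)" by (rule qf_summable) (use RHS in blast)
    have sg: "summable (\<lambda>n. qf N (g n) xf)" by (rule qf_summable) (use LHS in blast)
    have QE: "Q = (\<Sum>n. qf N (h n) xf) - (\<Sum>n. qf N (g n) xf)"
    proof -
      have "Q = qf N (\<lambda>a b. (\<Sum>n. h n a b) - (\<Sum>n. g n a b)) xf"
        unfolding Q_def
      proof (rule qf_cong)
        fix a b assume ab: "a < N" "b < N"
        show "bf m p (texp m p (tscale s (tpow m p A 2))) a b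
            - bf m p (texpect M (\<lambda>\<omega>. texp m p (tscale t (X \<omega>)))) a b
            = (\<Sum>n. h n a b) - (\<Sum>n. g n a b)"
          using LHS[OF ab] RHS[OF ab] by simp
      qed
      also have "\<dots> = qf N (\<lambda>a b. \<Sum>n. h n a b) xf - qf N (\<lambda>a b. \<Sum>n. g n a b) xf"
        by (rule qf_diff)
      also have "qf N (\<lambda>a b. \<Sum>n. h n a b) xf = (\<Sum>n. qf N (h n) xf)"
        by (rule qf_suminf) (use RHS in blast)
      also have "qf N (\<lambda>a b. \<Sum>n. g n a b) xf = (\<Sum>n. qf N (g n) xf)"
        by (rule qf_suminf) (use LHS in blast)
      finally show ?thesis .
    qed
    obtain rD where rD: "0 \<le> rD" "qf N D xf = of_real rD"
      using qf_even[OF hermC, of 1 xf] unfolding D_def by auto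
    obtain r0 where r0: "0 \<le> r0" "qf N (mpow N C 0) xf = of_real r0"
      using qf_even[OF hermC, of 0 xf] by auto
    have qh: "\<exists>r\<ge>0. qf N (h n) xf = of_real r" for n
    proof -
      obtain r where r: "r \<ge> 0" "qf N (mpow N C (2*n)) xf = of_real r" using qf_even[OF hermC] by blast
      have "qf N (h n) xf = qf N (\<lambda>a b. (of_real s ^ n / of_nat (fact n)) * mpow N D n a b) xf"
        by (rule qf_cong) (simp add: h_def)
      also have "\<dots> = (of_real s ^ n / of_nat (fact n)) * qf N (mpow N D n) xf"
        by (rule qf_scale)
      also have "qf N (mpow N D n) xf = qf N (mpow N C (2*n)) xf"
        by (rule qf_cong) (simp add: D_def mpow_sq_pow)
      finally have "qf N (h n) xf = of_real (s ^ n / fact n * r)" using r by simp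
      then show ?thesis using r s0 by (intro exI[of _ "s ^ n / fact n * r"]) auto
    qed
    have qh0: "qf N (h 0) xf = of_real r0"
    proof -
      have "qf N (h 0) xf = qf N (mpow N C 0) xf"
        by (rule qf_cong) (simp add: h_def)
      then show ?thesis using r0 by simp
    qed
    have qh1: "qf N (h 1) xf = of_real (s * rD)"
    proof -
      have "qf N (h 1) xf = qf N (\<lambda>a b. of_real s * D a b) xf"
      proof (rule qf_cong)
        fix a b assume ab: "a < N" "b < N"
        show "h 1 a b = of_real s * D a b"
          using mmul_id_left[of a N D D b] ab by (simp add: h_def)
      qed
      also have "\<dots> = of_real s * qf N D xf" by (rule qf_scale)
      finally show ?thesis using rD by simp
    qed
    have qg: "qf N (g n) xf = of_real (t ^ n / fact n) * qf N (\<lambda>a b. Ek n a b) xf" for n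
    proof -
      have "qf N (g n) xf = qf N (\<lambda>a b. of_real (t ^ n / fact n) * Ek n a b) xf"
        by (rule qf_cong) (simp add: g_def)
      also have "\<dots> = of_real (t ^ n / fact n) * qf N (\<lambda>a b. Ek n a b) xf" by (rule qf_scale)
      finally show ?thesis .
    qed
    have qg0: "qf N (g 0) xf = of_real r0"
    proof -
      have "qf N (g 0) xf = qf N (mpow N C 0) xf"
        by (rule qf_cong) (simp add: g_def Ek0)
      then show ?thesis using r0 by simp
    qed
    have qg1: "qf N (g 1) xf = 0"
    proof -
      have "qf N (g 1) xf = qf N (\<lambda>a b. 0) xf"
      proof (rule qf_cong)
        fix a b assume ab: "a < N" "b < N"
        have "Ek 1 a b = 0" by (rule Ek1[OF ab])
        then show "g 1 a b = 0" unfolding g_def by simp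
      qed
      then show ?thesis by (simp add: qf_def)
    qed
    have qEk: "Im (qf N (\<lambda>a b. Ek n a b) xf) = 0 \<and> Re (qf N (\<lambda>a b. Ek n a b) xf) \<le> fact n / 2 * rD"
      if n: "2 \<le> n" for n
    proof -
      have "qf N (\<lambda>a b. of_real (fact n / 2) * D a b - Ek n a b) xf
          = qf N (\<lambda>a b. of_real (fact n / 2) * D a b) xf - qf N (\<lambda>a b. Ek n a b) xf"
        by (rule qf_diff)
      also have "qf N (\<lambda>a b. of_real (fact n / 2) * D a b) xf = of_real (fact n / 2) * qf N D xf"
        by (rule qf_scale)
      finally have e: "qf N (\<lambda>a b. of_real (fact n / 2) * D a b - Ek n a b) xf
          = of_real (fact n / 2 * rD) - qf N (\<lambda>a b. Ek n a b) xf" using rD by simp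
      show ?thesis using hyp[OF n x] unfolding xf_def[symmetric] e by simp
    qed
    have imh: "Im (qf N (h n) xf) = 0" for n using qh[of n] by auto
    have reh: "0 \<le> Re (qf N (h n) xf)" for n using qh[of n] by auto
    have img: "Im (qf N (g n) xf) = 0" for n
    proof -
      consider "n = 0" | "n = 1" | "2 \<le> n" by linarith
      then show ?thesis
      proof cases
        case 1 then show ?thesis using qg0 by simp
      next
        case 2 then show ?thesis using qg1 by simp
      next
        case 3 then show ?thesis using qEk[OF 3] unfolding qg Im_ofreal_mult by simp
      qed
    qed
    have reg: "Re (qf N (g (n + 2)) xf) \<le> (t\<^sup>2 / 2 * rD) * t ^ n" for n
    proof -
      have "Re (qf N (g (n + 2)) xf) = t ^ (n + 2) / fact (n + 2) * Re (qf N (\<lambda>a b. Ek (n + 2) a b) xf)"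
        unfolding qg Re_ofreal_mult ..
      also have "\<dots> \<le> t ^ (n + 2) / fact (n + 2) * (fact (n + 2) / 2 * rD)"
        using qEk[of "n + 2"] t0 by (intro mult_left_mono) auto
      also have "\<dots> = t ^ (n + 2) / 2 * rD"
        by (rule cancel_fact) simp
      also have "\<dots> = (t\<^sup>2 / 2 * rD) * t ^ n" by (simp add: power_add power2_eq_square)
      finally show ?thesis .
    qed
    have ImQ: "Im Q = 0"
      unfolding QE using Im_suminf[OF sh] Im_suminf[OF sg] imh img by simp
    have h_lower: "r0 + s * rD \<le> Re (\<Sum>n. qf N (h n) xf)"
    proof -
      have "(\<Sum>n<2. Re (qf N (h n) xf)) \<le> (\<Sum>n. Re (qf N (h n) xf))"
        by (rule sum_le_suminf) (use summable_Re[OF sh] reh in auto)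
      moreover have "(\<Sum>n<2. Re (qf N (h n) xf)) = r0 + s * rD"
        using qh0 qh1 by (simp add: numeral_2_eq_2)
      ultimately show ?thesis using Re_suminf[OF sh] by simp
    qed
    have g_upper: "Re (\<Sum>n. qf N (g n) xf) \<le> r0 + s * rD"
    proof -
      define G where "G n = Re (qf N (g n) xf)" for n
      have sG: "summable G" unfolding G_def by (rule summable_Re[OF sg])
      have "(\<Sum>n. G n) = (\<Sum>n. G (n + 2)) + (\<Sum>n<2. G n)"
        by (rule suminf_split_initial_segment[OF sG])
      also have "(\<Sum>n<2. G n) = r0"
        using qg0 qg1 by (simp add: G_def numeral_2_eq_2)
      also have "(\<Sum>n. G (n + 2)) \<le> (\<Sum>n. (t\<^sup>2 / 2 * rD) * t ^ n)"
      proof (rule suminf_le)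
        show "\<And>n. G (n + 2) \<le> t\<^sup>2 / 2 * rD * t ^ n" unfolding G_def by (rule reg)
        show "summable (\<lambda>n. G (n + 2))" using sG by (rule summable_ignore_initial_segment)
        show "summable (\<lambda>n. t\<^sup>2 / 2 * rD * t ^ n)"
          using assms(8) t0 by (intro summable_mult summable_geometric) simp
      qed
      also have "(\<Sum>n. (t\<^sup>2 / 2 * rD) * t ^ n) = (t\<^sup>2 / 2 * rD) * (1 / (1 - t))"
        using assms(8) t0 by (subst suminf_mult) (auto intro: summable_geometric simp: suminf_geometric)
      also have "\<dots> = s * rD" using assms(8) by (simp add: s_def field_simps)
      finally show ?thesis unfolding G_def Re_suminf[OF sg] by simp
    qed
    have ReQ: "0 \<le> Re Q" unfolding QE using h_lower g_upper by simp
    show "Im (qf N (\<lambda>a b. bf m p (texp m p (tscale s (tpow m p A 2))) a b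
        - bf m p (texpect M (\<lambda>\<omega>. texp m p (tscale t (X \<omega>)))) a b) (\<lambda>i. x $ i)) = 0 \<and>
      0 \<le> Re (qf N (\<lambda>a b. bf m p (texp m p (tscale s (tpow m p A 2))) a b
        - bf m p (texpect M (\<lambda>\<omega>. texp m p (tscale t (X \<omega>)))) a b) (\<lambda>i. x $ i))"
      using ImQ ReQ unfolding Q_def xf_def by simp
  qed
qed

end
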